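(* Let $f:\mathbb{R}^n\to\mathbb{R}$ be twice continuously differentiable with $L$-Lipschitz gradient, let $\varphi_s:\mathbb{R}^{n_s}\to\mathbb{R}$ ($s=1,\dots,p$) be twice continuously differentiable and $\mu_s$-strongly convex ($\mu_s>0$), and $\mu=\min_s\mu_s$. If $0<\alpha<\frac\mu L$, then each map $$\psi_s(x)=(I_n-U_sU_s^T)x+U_s[\nabla\varphi_s]^{-1}\big(\nabla\varphi_s(x(s))-\alpha\nabla_sf(x)\big),\qquad s=1,\dots,p,$$ is a diffeomorphism of $\mathbb{R}^n$.
   Context: $\|\nabla f(x)-\nabla f(y)\|\le L\|x-y\|$ for all $x,y$, $L>0$. The variable is partitioned as $x=(x(1),\dots,x(p))$, $x(s)\in\mathbb{R}^{n_s}$, $\sum_sn_s=n$; $U_s\in\mathbb{R}^{n\times n_s}$ is the $s$-th block-column of $I_n$ and $\nabla_sf(x)=U_s^T\nabla f(x)$. Strong convexity: $\varphi_s(y)\ge\varphi_s(x)+\langle\nabla\varphi_s(x),y-x\rangle+\frac{\mu_s}2\|y-x\|^2$; $[\nabla\varphi_s]^{-1}$ denotes the inverse of the bijection $\nabla\varphi_s:\mathbb{R}^{n_s}\to\mathbb{R}^{n_s}$. *)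

theory Defs
  imports "HOL-Analysis.Analysis"
begin

text \<open>The coordinates of R^n are indexed by the finite type 'n; the block partition is
given by blk :: 'n => nat (coordinate i belongs to block blk i).  R^{n_s} is identified
(isometrically, via coordinates) with the coordinate subspace of block s.\<close>

definition block_space :: "('n \<Rightarrow> nat) \<Rightarrow> nat \<Rightarrow> (real^'n) set" where
  "block_space blk s = {y. \<forall>i. blk i \<noteq> s \<longrightarrow> y $ i = 0}"

text \<open>block_proj blk s x = U_s U_s^T x.\<close>
definition block_proj :: "('n \<Rightarrow> nat) \<Rightarrow> nat \<Rightarrow> real^'n \<Rightarrow> real^'n" where
  "block_proj blk s x = (\<chi> i. if blk i = s then x $ i else 0)"

definition C1_on_UNIV :: "('a::euclidean_space \<Rightarrow> 'b::euclidean_space) \<Rightarrow> bool" where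
  "C1_on_UNIV g \<longleftrightarrow> (\<exists>D. (\<forall>x. (g has_derivative blinfun_apply (D x)) (at x)) \<and> continuous_on UNIV D)"

definition is_diffeo :: "('a::euclidean_space \<Rightarrow> 'a) \<Rightarrow> bool" where
  "is_diffeo g \<longleftrightarrow> bij g \<and> C1_on_UNIV g \<and> C1_on_UNIV (inv g)"

end

theory Submission
  imports Defs
begin


definition invL :: "('a::euclidean_space \<Rightarrow>\<^sub>L 'a) \<Rightarrow> ('a \<Rightarrow>\<^sub>L 'a)" where
  "invL A = Blinfun (inv (blinfun_apply A))"

lemma invL_props:
  fixes A :: "'a::euclidean_space \<Rightarrow>\<^sub>L 'a"
  assumes m: "m > 0" and lb: "\<And>w. m * norm w \<le> norm (A w)"
  shows "\<And>z. A (invL A z) = z" "\<And>w. invL A (A w) = w"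
    "\<And>z. m * norm (invL A z) \<le> norm z"
proof -
  have inj: "inj (blinfun_apply A)"
  proof (rule injI)
    fix x y assume "A x = A y"
    then have "A (x - y) = 0" by (simp add: blinfun.diff_right)
    then have "m * norm (x - y) \<le> 0" using lb[of "x-y"] by simp
    then show "x = y" using m by (simp add: mult_le_0_iff)
  qed
  have lin: "linear (blinfun_apply A)" using blinfun.bounded_linear_right linear_linear by blast
  have surj: "surj (blinfun_apply A)" using linear_injective_imp_surjective[OF lin inj] by simp
  have bl: "bounded_linear (inv (blinfun_apply A))"
    by (rule inj_linear_imp_inv_bounded_linear[OF blinfun.bounded_linear_right inj])
  have ap: "\<And>z. invL A z = inv (blinfun_apply A) z" unfolding invL_def using bl
    by (simp add: bounded_linear_Blinfun_apply)
  show 1: "\<And>z. A (invL A z) = z" using surj by (simp add: ap surj_f_inv_f)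
  show "\<And>w. invL A (A w) = w" using inj by (simp add: ap)
  show "\<And>z. m * norm (invL A z) \<le> norm z" using lb 1 by metis
qed

lemma invL_lip:
  fixes A B :: "'a::euclidean_space \<Rightarrow>\<^sub>L 'a"
  assumes m: "m > 0" and lbA: "\<And>w. m * norm w \<le> norm (A w)"
    and lbB: "\<And>w. m * norm w \<le> norm (B w)"
  shows "norm (invL A - invL B) \<le> norm (A - B) / m^2"
proof (rule norm_blinfun_bound)
  show "0 \<le> norm (A - B) / m^2" by simp
  fix w
  let ?u = "invL B w"
  have Bu: "B ?u = w" using invL_props(1)[OF m lbB] .
  have "invL A w - invL B w = invL A (w - A ?u)"
    using invL_props(2)[OF m lbA, of ?u] by (simp add: blinfun.diff_right)
  also have "w - A ?u = (B - A) ?u" using Bu by (simp add: blinfun.diff_left)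
  finally have eq: "invL A w - invL B w = invL A ((B - A) ?u)" .
  have "m * norm (invL A ((B - A) ?u)) \<le> norm ((B - A) ?u)" using invL_props(3)[OF m lbA] .
  also have "\<dots> \<le> norm (B - A) * norm ?u" by (rule norm_blinfun)
  finally have 1: "m * norm (invL A w - invL B w) \<le> norm (A - B) * norm ?u"
    using eq by (simp add: norm_minus_commute)
  have 2: "m * norm ?u \<le> norm w" using invL_props(3)[OF m lbB] .
  have "m * (m * norm (invL A w - invL B w)) \<le> m * (norm (A - B) * norm ?u)"
    using 1 m by simp
  also have "\<dots> = norm (A - B) * (m * norm ?u)" by simp
  also have "\<dots> \<le> norm (A - B) * norm w" using 2 by (simp add: mult_left_mono)
  finally have "m^2 * norm (invL A w - invL B w) \<le> norm (A - B) * norm w"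
    by (simp add: power2_eq_square algebra_simps)
  then show "norm ((invL A - invL B) w) \<le> norm (A - B) / m^2 * norm w"
    using m by (simp add: field_simps blinfun.diff_left)
qed

lemma deriv_lower:
  fixes K :: "'a::euclidean_space \<Rightarrow> 'b::euclidean_space"
  assumes D: "(K has_derivative D) (at x)" and m: "m > 0"
    and lb: "\<And>y. m * norm (y - x) \<le> norm (K y - K x)"
  shows "m * norm w \<le> norm (D w)"
proof (rule ccontr)
  assume "\<not> ?thesis"
  then have lt: "norm (D w) < m * norm w" by simp
  have bl: "bounded_linear D" using D has_derivative_bounded_linear by blast
  have w0: "w \<noteq> 0" using lt bl by (auto simp: linear_simps)
  then have nw: "norm w > 0" by simp
  define e where "e = (m * norm w - norm (D w)) / (2 * norm w)"
  have e: "e > 0" using lt nw by (simp add: e_def)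
  obtain d where d: "d > 0" and dd: "\<And>y. norm (y - x) < d \<Longrightarrow>
      norm (K y - K x - D (y - x)) \<le> e * norm (y - x)"
    using D e unfolding has_derivative_at_alt by blast
  define t where "t = d / (2 * norm w)"
  have t: "t > 0" using d nw by (simp add: t_def)
  have ny: "norm ((x + t *\<^sub>R w) - x) = t * norm w" using t by simp
  have "t * norm w < d" using d nw by (simp add: t_def)
  then have 1: "norm (K (x + t *\<^sub>R w) - K x - t *\<^sub>R D w) \<le> e * (t * norm w)"
    using dd[of "x + t *\<^sub>R w"] ny t by (simp add: linear_simps bl)
  have 2: "m * (t * norm w) \<le> norm (K (x + t *\<^sub>R w) - K x)" using lb[of "x + t *\<^sub>R w"] ny t by simp
  have "norm (K (x + t *\<^sub>R w) - K x) \<le> norm (K (x + t *\<^sub>R w) - K x - t *\<^sub>R D w) + norm (t *\<^sub>R D w)"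
    by (metis diff_add_cancel norm_triangle_ineq)
  then have "m * (t * norm w) \<le> e * (t * norm w) + t * norm (D w)" using 1 2 t by simp
  then have "t * (m * norm w) \<le> t * (e * norm w + norm (D w))" by (simp add: algebra_simps)
  then have "m * norm w \<le> e * norm w + norm (D w)" using t by simp
  moreover have "e * norm w = (m * norm w - norm (D w)) / 2" using nw by (simp add: e_def)
  ultimately show False using lt by (simp add: field_simps)
qed

lemma diffeo_from_lower:
  fixes K :: "'a::euclidean_space \<Rightarrow> 'a"
  assumes D: "\<And>x. (K has_derivative blinfun_apply (D x)) (at x)" and cD: "continuous_on UNIV D"
    and m: "m > 0" and lb: "\<And>x y. m * norm (x - y) \<le> norm (K x - K y)"
  shows "is_diffeo K"
proof -
  have inj: "inj K"
  proof (rule injI)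
    fix x y assume "K x = K y"
    then have "m * norm (x - y) \<le> 0" using lb[of x y] by simp
    then show "x = y" using m by (simp add: mult_le_0_iff)
  qed
  have cK: "continuous_on UNIV K"
    using D has_derivative_continuous continuous_at_imp_continuous_on by blast
  have op: "open (range K)" by (rule invariance_of_domain[OF cK open_UNIV inj])
  have cl: "closed (range K)"
    unfolding closed_sequential_limits
  proof (intro allI impI, elim conjE)
    fix xs l assume xs: "\<forall>n. xs n \<in> range K" and lim: "xs \<longlonglongrightarrow> l"
    have "\<forall>n. \<exists>y. xs n = K y" using xs by blast
    then obtain z where z: "\<And>n. xs n = K (z n)" by metis
    have "Cauchy xs" using lim by (rule LIMSEQ_imp_Cauchy)
    have "Cauchy z"
      unfolding Cauchy_def
    proof (intro allI impI)
      fix e :: real assume e: "e > 0"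
      then obtain M where M: "\<And>a b. a \<ge> M \<Longrightarrow> b \<ge> M \<Longrightarrow> dist (xs a) (xs b) < m * e"
        using \<open>Cauchy xs\<close> m unfolding Cauchy_def by (meson mult_pos_pos)
      show "\<exists>M. \<forall>a\<ge>M. \<forall>b\<ge>M. dist (z a) (z b) < e"
      proof (intro exI allI impI)
        fix a b assume "a \<ge> M" "b \<ge> M"
        then have "m * norm (z a - z b) < m * e"
          using M[of a b] lb[of "z a" "z b"] z by (simp add: dist_norm)
        then show "dist (z a) (z b) < e" using m by (simp add: dist_norm)
      qed
    qed
    then obtain z0 where z0: "z \<longlonglongrightarrow> z0" using Cauchy_convergent_iff convergent_def by blast
    have "(\<lambda>n. K (z n)) \<longlonglongrightarrow> K z0"
      using continuous_on_tendsto_compose[OF cK z0] by auto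
    moreover have "xs = (\<lambda>n. K (z n))" using z by (intro ext) simp
    ultimately have "xs \<longlonglongrightarrow> K z0" by simp
    then have "l = K z0" using lim by (rule LIMSEQ_unique[rotated])
    then show "l \<in> range K" by simp
  qed
  have surj: "surj K" using op cl clopen[of "range K"] by auto
  have bij: "bij K" using inj surj by (simp add: bij_def)
  define G where "G = inv K"
  have KG: "\<And>y. K (G y) = y" unfolding G_def using surj by (simp add: surj_f_inv_f)
  have GK: "\<And>x. G (K x) = x" unfolding G_def using inj by simp
  have Glip: "m * norm (G y - G z) \<le> norm (y - z)" for y z using lb[of "G y" "G z"] KG by simp
  have cG: "continuous_on UNIV G"
    unfolding continuous_on_iff
  proof (intro ballI allI impI)
    fix x and e :: real assume e: "e > 0"
    show "\<exists>d>0. \<forall>x'\<in>UNIV. dist x' x < d \<longrightarrow> dist (G x') (G x) < e"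
    proof (intro exI conjI ballI impI)
      show "m * e > 0" using m e by simp
      fix x' assume "dist x' x < m * e"
      then have "m * norm (G x' - G x) < m * e" using Glip[of x' x] by (simp add: dist_norm)
      then show "dist (G x') (G x) < e" using m by (simp add: dist_norm)
    qed
  qed
  have lbD: "\<And>x w. m * norm w \<le> norm (D x w)"
  proof -
    fix x w
    show "m * norm w \<le> norm (D x w)"
      by (rule deriv_lower[OF D m]) (use lb in auto)
  qed
  define DG where "DG y = invL (D (G y))" for y
  have derG: "\<And>y. (G has_derivative blinfun_apply (DG y)) (at y)"
  proof -
    fix y
    show "(G has_derivative blinfun_apply (DG y)) (at y)"
    proof (rule has_derivative_inverse_basic[where g=G and y=y and T=UNIV, OF D[of "G y"]])
      show "bounded_linear (blinfun_apply (DG y))" by (rule blinfun.bounded_linear_right)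
      show "blinfun_apply (DG y) \<circ> blinfun_apply (D (G y)) = id"
        unfolding DG_def using invL_props(2)[OF m lbD] by auto
      show "continuous (at y) G" using cG by (simp add: continuous_on_eq_continuous_at)
    qed (use KG in auto)
  qed
  have cDG: "continuous_on UNIV DG"
  proof -
    have cDG0: "continuous_on UNIV (\<lambda>y. D (G y))"
      using cD cG by (metis continuous_on_compose2 subset_UNIV)
    show ?thesis
      unfolding continuous_on_iff
    proof (intro ballI allI impI)
      fix y and e :: real assume e: "e > 0"
      obtain d where d: "d > 0" and dd: "\<And>y'. dist y' y < d \<Longrightarrow> dist (D (G y')) (D (G y)) < e * m^2"
        using cDG0 e m unfolding continuous_on_iff by (metis UNIV_I mult_pos_pos zero_less_power)
      show "\<exists>d>0. \<forall>y'\<in>UNIV. dist y' y < d \<longrightarrow> dist (DG y') (DG y) < e"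
      proof (intro exI conjI ballI impI)
        show "d > 0" by fact
        fix y' assume "dist y' y < d"
        then have 1: "norm (D (G y') - D (G y)) < e * m^2" using dd by (simp add: dist_norm)
        have "norm (DG y' - DG y) \<le> norm (D (G y') - D (G y)) / m^2"
          unfolding DG_def by (rule invL_lip[OF m lbD lbD])
        also have "\<dots> < e" using 1 m by (simp add: field_simps)
        finally show "dist (DG y') (DG y) < e" by (simp add: dist_norm)
      qed
    qed
  qed
  have "C1_on_UNIV K" unfolding C1_on_UNIV_def using D cD by blast
  moreover have "C1_on_UNIV G" unfolding C1_on_UNIV_def using derG cDG by blast
  ultimately show ?thesis unfolding is_diffeo_def G_def using bij by blast
qed



lemma C1_comp:
  fixes F :: "'b::euclidean_space \<Rightarrow> 'c::euclidean_space" and G :: "'a::euclidean_space \<Rightarrow> 'b"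
  assumes "C1_on_UNIV F" "C1_on_UNIV G"
  shows "C1_on_UNIV (F \<circ> G)"
proof -
  obtain DF where DF: "\<And>x. (F has_derivative blinfun_apply (DF x)) (at x)" "continuous_on UNIV DF"
    using assms(1) unfolding C1_on_UNIV_def by blast
  obtain DG where DG: "\<And>x. (G has_derivative blinfun_apply (DG x)) (at x)" "continuous_on UNIV DG"
    using assms(2) unfolding C1_on_UNIV_def by blast
  have cG: "continuous_on UNIV G"
    using DG(1) has_derivative_continuous continuous_at_imp_continuous_on by blast
  have "\<And>x. (F \<circ> G has_derivative blinfun_apply (DF (G x) o\<^sub>L DG x)) (at x)"
  proof -
    fix x
    have "((\<lambda>x. F (G x)) has_derivative (\<lambda>v. DF (G x) (DG x v))) (at x)"
      by (rule has_derivative_compose[OF DG(1) DF(1)])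
    then show "(F \<circ> G has_derivative blinfun_apply (DF (G x) o\<^sub>L DG x)) (at x)"
      by (simp add: o_def blinfun_compose.rep_eq)
  qed
  moreover have "continuous_on UNIV (\<lambda>x. DF (G x) o\<^sub>L DG x)"
    using DF(2) DG(2) cG
    by (intro continuous_intros) (auto intro: continuous_on_compose2[OF DF(2)])
  ultimately show ?thesis unfolding C1_on_UNIV_def by (intro exI[of _ "\<lambda>x. DF (G x) o\<^sub>L DG x"]) simp
qed

lemma diffeo_comp:
  fixes F G :: "'a::euclidean_space \<Rightarrow> 'a"
  assumes "is_diffeo F" "is_diffeo G"
  shows "is_diffeo (F \<circ> G)"
  using assms unfolding is_diffeo_def
  by (simp add: bij_comp o_inv_distrib C1_comp)

lemma diffeo_inv:
  fixes F :: "'a::euclidean_space \<Rightarrow> 'a"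
  assumes "is_diffeo F"
  shows "is_diffeo (inv F)"
  using assms unfolding is_diffeo_def
  by (simp add: bij_imp_bij_inv inv_inv_eq)



lemma P_bl: "bounded_linear (block_proj blk s)"
proof -
  have "linear (block_proj blk s)"
    by (rule linearI) (auto simp: block_proj_def vec_eq_iff)
  then show ?thesis by (simp add: linear_linear)
qed

lemma P_in: "block_proj blk s x \<in> block_space blk s"
  by (simp add: block_proj_def block_space_def)

lemma P_id: "x \<in> block_space blk s \<Longrightarrow> block_proj blk s x = x"
  by (auto simp: block_proj_def block_space_def vec_eq_iff)

lemma P_idem: "block_proj blk s (block_proj blk s x) = block_proj blk s x"
  by (rule P_id[OF P_in])

lemma V_diff: "u \<in> block_space blk s \<Longrightarrow> v \<in> block_space blk s \<Longrightarrow> u - v \<in> block_space blk s"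
  by (simp add: block_space_def)

lemma V_add: "u \<in> block_space blk s \<Longrightarrow> v \<in> block_space blk s \<Longrightarrow> u + v \<in> block_space blk s"
  by (simp add: block_space_def)

lemma V_scale: "u \<in> block_space blk s \<Longrightarrow> c *\<^sub>R u \<in> block_space blk s"
  by (simp add: block_space_def)

lemma P_orth: "u \<in> block_space blk s \<Longrightarrow> inner u (x - block_proj blk s x) = 0"
  by (auto simp: inner_vec_def block_space_def block_proj_def intro!: sum.neutral)

lemma P_norm: "norm (block_proj blk s x) \<le> norm x"
proof -
  have "norm (block_proj blk s x + (x - block_proj blk s x)) ^ 2 = norm (block_proj blk s x) ^ 2 + norm (x - block_proj blk s x) ^ 2"
    by (rule norm_add_Pythagorean) (simp add: orthogonal_def P_orth[OF P_in])
  then have "norm (block_proj blk s x) ^ 2 \<le> norm x ^ 2" by simp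
  then show ?thesis by (simp add: power2_le_iff_abs_le)
qed



lemma K_lower:
  fixes g h :: "real^'n \<Rightarrow> real^'n" and blk :: "'n \<Rightarrow> nat"
  assumes gV: "\<forall>u\<in>block_space blk s. g u \<in> block_space blk s"
    and mono: "\<forall>u\<in>block_space blk s. \<forall>v\<in>block_space blk s. mu * (norm (u - v))^2 \<le> inner (g u - g v) (u - v)"
    and hL: "\<forall>x y. norm (h x - h y) \<le> L * norm (x - y)"
    and c: "0 \<le> c" and L: "0 \<le> L" and cL: "c * L < mu"
  shows "(mu - c*L) * norm (x - y) \<le> (mu + 1) *
     norm (((x - block_proj blk s x) + g (block_proj blk s x) - c *\<^sub>R block_proj blk s (h x))
         - ((y - block_proj blk s y) + g (block_proj blk s y) - c *\<^sub>R block_proj blk s (h y)))"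
proof -
  let ?P = "block_proj blk s"
  let ?V = "block_space blk s"
  have Pd: "\<And>u v. ?P (u - v) = ?P u - ?P v" using linear_diff[OF bounded_linear.linear[OF P_bl]] by blast
  define a where "a = (x - ?P x) - (y - ?P y)"
  define b where "b = ?P x - ?P y"
  define w where "w = g (?P x) - g (?P y) - c *\<^sub>R (?P (h x) - ?P (h y))"
  define N where "N = norm (((x - ?P x) + g (?P x) - c *\<^sub>R ?P (h x))
         - ((y - ?P y) + g (?P y) - c *\<^sub>R ?P (h y)))"
  define d where "d = mu - c * L"
  define e where "e = c * L"
  have d: "d > 0" using cL by (simp add: d_def)
  have e: "e \<ge> 0" using c L by (simp add: e_def)
  have a_eq: "a = (x - y) - ?P (x - y)" by (simp add: a_def Pd)
  have bV: "b \<in> ?V" by (simp add: b_def V_diff P_in)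
  have wV: "w \<in> ?V" unfolding w_def
    by (intro V_diff V_scale) (auto simp: gV P_in)
  have KK: "N = norm (a + w)" by (simp add: N_def a_def w_def algebra_simps)
  have aw: "inner a w = 0" using P_orth[OF wV, of "x - y"] by (simp add: a_eq inner_commute)
  have N2: "N^2 = norm a ^ 2 + norm w ^ 2"
    unfolding KK by (rule norm_add_Pythagorean) (simp add: orthogonal_def aw)
  have N0: "N \<ge> 0" by (simp add: KK)
  have aN: "norm a \<le> N" by (rule power2_le_imp_le) (simp_all add: N2 N0)
  have wN: "norm w \<le> N" by (rule power2_le_imp_le) (simp_all add: N2 N0)
  have xy: "x - y = a + b" by (simp add: a_def b_def)
  have nxy: "norm (x - y) \<le> norm a + norm b" unfolding xy by (rule norm_triangle_ineq)
  have m1: "mu * norm b ^ 2 \<le> inner (g (?P x) - g (?P y)) b"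
    using mono P_in unfolding b_def by blast
  have "inner (?P (h x) - ?P (h y)) b \<le> norm (?P (h x) - ?P (h y)) * norm b"
    by (rule norm_cauchy_schwarz)
  also have "norm (?P (h x) - ?P (h y)) \<le> norm (h x - h y)" unfolding Pd[symmetric] by (rule P_norm)
  then have "norm (?P (h x) - ?P (h y)) * norm b \<le> L * norm (x - y) * norm b"
    using hL by (meson mult_right_mono norm_ge_zero order_trans)
  finally have m2: "c * inner (?P (h x) - ?P (h y)) b \<le> c * (L * norm (x - y) * norm b)"
    using c by (simp add: mult_left_mono)
  have "inner w b = inner (g (?P x) - g (?P y)) b - c * inner (?P (h x) - ?P (h y)) b"
    by (simp add: w_def inner_diff_left)
  then have "inner w b \<ge> mu * norm b ^ 2 - e * norm (x - y) * norm b"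
    using m1 m2 by (simp add: e_def algebra_simps)
  moreover have "e * norm (x - y) * norm b \<le> e * (norm a + norm b) * norm b"
    using nxy e by (simp add: mult_left_mono mult_right_mono)
  moreover have "inner w b \<le> norm w * norm b" by (rule norm_cauchy_schwarz)
  ultimately have "norm b * (d * norm b) \<le> norm b * (norm w + e * norm a)"
    by (simp add: d_def e_def power2_eq_square algebra_simps)
  then have bb: "d * norm b \<le> norm w + e * norm a"
    by (cases "norm b = 0") (use d e in \<open>auto simp: mult_le_cancel_left\<close>)
  have "e * norm a \<le> e * N" using aN e by (simp add: mult_left_mono)
  then have "d * norm b \<le> N + e * N" using bb wN by linarith
  moreover have "d * norm (x - y) \<le> d * norm a + d * norm b"
    using mult_left_mono[OF nxy, of d] d by (simp add: distrib_left)
  moreover have "d * norm a \<le> d * N" using aN d by simp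
  ultimately have "d * norm (x - y) \<le> d * N + (N + e * N)" by linarith
  then have "d * norm (x - y) \<le> (d + 1 + e) * N" by (simp add: algebra_simps)
  then show ?thesis by (simp add: d_def e_def N_def)
qed

lemma K_diffeo:
  fixes g h :: "real^'n \<Rightarrow> real^'n" and blk :: "'n \<Rightarrow> nat"
  assumes gV: "\<forall>u\<in>block_space blk s. g u \<in> block_space blk s"
    and mono: "\<forall>u\<in>block_space blk s. \<forall>v\<in>block_space blk s. mu * (norm (u - v))^2 \<le> inner (g u - g v) (u - v)"
    and hL: "\<forall>x y. norm (h x - h y) \<le> L * norm (x - y)"
    and c: "0 \<le> c" and L: "0 \<le> L" and cL: "c * L < mu"
    and gder: "\<forall>x\<in>block_space blk s. (g has_derivative blinfun_apply (H x)) (at x within block_space blk s)"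
    and gcont: "continuous_on (block_space blk s) H"
    and hC1: "C1_on_UNIV h"
  shows "is_diffeo (\<lambda>x. (x - block_proj blk s x) + g (block_proj blk s x) - c *\<^sub>R block_proj blk s (h x))"
proof -
  let ?P = "block_proj blk s"
  let ?V = "block_space blk s"
  obtain Dh where Dh: "\<And>x. (h has_derivative blinfun_apply (Dh x)) (at x)" "continuous_on UNIV Dh"
    using hC1 unfolding C1_on_UNIV_def by blast
  define Pb where "Pb = Blinfun ?P"
  have Pb: "blinfun_apply Pb = ?P" unfolding Pb_def by (rule bounded_linear_Blinfun_apply[OF P_bl])
  define DK where "DK x = (id_blinfun - Pb) + (H (?P x) o\<^sub>L Pb) - c *\<^sub>R (Pb o\<^sub>L Dh x)" for x
  have der: "((\<lambda>x. (x - ?P x) + g (?P x) - c *\<^sub>R ?P (h x)) has_derivative blinfun_apply (DK x)) (at x)" for x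
  proof -
    have d1: "((\<lambda>x. x - ?P x) has_derivative (\<lambda>v. v - ?P v)) (at x)"
      by (rule has_derivative_diff[OF has_derivative_ident bounded_linear_imp_has_derivative[OF P_bl]])
    have d2: "((\<lambda>x. g (?P x)) has_derivative (\<lambda>v. H (?P x) (?P v))) (at x within UNIV)"
      by (rule has_derivative_in_compose2[of ?V g "\<lambda>x. blinfun_apply (H x)" ?P UNIV x ?P])
         (use gder P_in bounded_linear_imp_has_derivative[OF P_bl] in auto)
    have d3: "((\<lambda>x. c *\<^sub>R ?P (h x)) has_derivative (\<lambda>v. c *\<^sub>R ?P (Dh x v))) (at x)"
      by (intro has_derivative_scaleR_right bounded_linear.has_derivative[OF P_bl] Dh)
    have "((\<lambda>x. (x - ?P x) + g (?P x) - c *\<^sub>R ?P (h x)) has_derivative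
        (\<lambda>v. (v - ?P v) + H (?P x) (?P v) - c *\<^sub>R ?P (Dh x v))) (at x)"
      using has_derivative_diff[OF has_derivative_add[OF d1 d2[simplified]] d3] by simp
    then show ?thesis
      by (rule has_derivative_eq_rhs)
         (simp add: fun_eq_iff DK_def Pb blinfun.diff_left blinfun.add_left blinfun.scaleR_left)
  qed
  have cH: "continuous_on UNIV (\<lambda>x. H (?P x))"
    by (rule continuous_on_compose2[OF gcont bounded_linear.continuous_on[OF P_bl continuous_on_id]])
       (auto simp: P_in)
  have cDK: "continuous_on UNIV DK"
    unfolding DK_def using cH Dh(2) by (intro continuous_intros) auto
  have mu1: "mu + 1 > 0" using cL c L by (smt (verit) mult_nonneg_nonneg)
  have m: "(mu - c*L) / (mu + 1) > 0" using cL mu1 by simp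
  show ?thesis
  proof (rule diffeo_from_lower[OF der cDK m])
    fix x y
    have "(mu - c*L) * norm (x - y) \<le> (mu + 1) *
     norm (((x - ?P x) + g (?P x) - c *\<^sub>R ?P (h x)) - ((y - ?P y) + g (?P y) - c *\<^sub>R ?P (h y)))"
      by (rule K_lower[OF gV mono hL c L cL])
    then show "(mu - c*L) / (mu + 1) * norm (x - y) \<le>
       norm (((x - ?P x) + g (?P x) - c *\<^sub>R ?P (h x)) - ((y - ?P y) + g (?P y) - c *\<^sub>R ?P (h y)))"
      using mu1 by (simp add: field_simps)
  qed
qed



theorem lemma4:
  fixes f :: "real^'n \<Rightarrow> real" and gf :: "real^'n \<Rightarrow> real^'n"
    and blk :: "'n \<Rightarrow> nat" and p :: nat
    and phi :: "nat \<Rightarrow> real^'n \<Rightarrow> real" and gphi :: "nat \<Rightarrow> real^'n \<Rightarrow> real^'n"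
    and mu :: "nat \<Rightarrow> real" and L \<alpha> :: real
  assumes p: "p \<ge> 1"
    and blk_range: "\<forall>i. blk i \<in> {1..p}"
    and blk_nonempty: "\<forall>s\<in>{1..p}. \<exists>i. blk i = s"
    and f_grad: "\<forall>x. (f has_derivative (\<lambda>h. gf x \<bullet> h)) (at x)"
    and f_C2: "C1_on_UNIV gf"
    and L_pos: "L > 0"
    and f_Lip: "\<forall>x y. norm (gf x - gf y) \<le> L * norm (x - y)"
    and phi_grad: "\<forall>s\<in>{1..p}. \<forall>x\<in>block_space blk s.
        (phi s has_derivative (\<lambda>h. gphi s x \<bullet> h)) (at x within block_space blk s)
        \<and> gphi s x \<in> block_space blk s"
    and phi_C2: "\<forall>s\<in>{1..p}. \<exists>H. (\<forall>x\<in>block_space blk s.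
        (gphi s has_derivative blinfun_apply (H x)) (at x within block_space blk s))
        \<and> continuous_on (block_space blk s) H"
    and mu_pos: "\<forall>s\<in>{1..p}. mu s > 0"
    and phi_sc: "\<forall>s\<in>{1..p}. \<forall>x\<in>block_space blk s. \<forall>y\<in>block_space blk s.
        phi s y \<ge> phi s x + gphi s x \<bullet> (y - x) + mu s / 2 * (norm (y - x))\<^sup>2"
    and alpha_pos: "0 < \<alpha>"
    and alpha_lt: "\<alpha> < Min (mu ` {1..p}) / L"
  shows "\<forall>s\<in>{1..p}. is_diffeo (\<lambda>x. (x - block_proj blk s x)
          + inv_into (block_space blk s) (gphi s)
              (gphi s (block_proj blk s x) - \<alpha> *\<^sub>R block_proj blk s (gf x)))"
proof
  fix s assume s: "s \<in> {1..p}"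
  let ?P = "block_proj blk s"
  let ?V = "block_space blk s"
  define g where "g = gphi s"
  have Pd: "\<And>u v. ?P (u - v) = ?P u - ?P v" using linear_diff[OF bounded_linear.linear[OF P_bl]] by blast
  have Pa: "\<And>u v. ?P (u + v) = ?P u + ?P v" using linear_add[OF bounded_linear.linear[OF P_bl]] by blast
  have gV: "\<forall>u\<in>?V. g u \<in> ?V" using phi_grad s by (simp add: g_def)
  have mono: "\<forall>u\<in>?V. \<forall>v\<in>?V. mu s * (norm (u - v))^2 \<le> inner (g u - g v) (u - v)"
  proof (intro ballI)
    fix u v assume u: "u \<in> ?V" and v: "v \<in> ?V"
    have 1: "phi s v \<ge> phi s u + g u \<bullet> (v - u) + mu s / 2 * (norm (v - u))\<^sup>2"
      using phi_sc s u v by (simp add: g_def)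
    have 2: "phi s u \<ge> phi s v + g v \<bullet> (u - v) + mu s / 2 * (norm (u - v))\<^sup>2"
      using phi_sc s u v by (simp add: g_def)
    have "g u \<bullet> (v - u) = - (g u \<bullet> (u - v))" by (simp add: inner_diff_right)
    moreover have "norm (v - u) = norm (u - v)" by (rule norm_minus_commute)
    ultimately show "mu s * (norm (u - v))^2 \<le> inner (g u - g v) (u - v)"
      using 1 2 by (simp add: inner_diff_left)
  qed
  obtain H where H: "\<forall>x\<in>?V. (g has_derivative blinfun_apply (H x)) (at x within ?V)"
      "continuous_on ?V H"
    using phi_C2 s unfolding g_def by blast
  have "Min (mu ` {1..p}) \<le> mu s" using s by (intro Min_le) auto
  then have "\<alpha> * L < mu s" using alpha_lt L_pos by (simp add: pos_less_divide_eq)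
  then have cL: "\<alpha> * L < mu s" "0 * L < mu s" using mu_pos s by auto
  define Gam where "Gam = (\<lambda>x. (x - ?P x) + g (?P x) - 0 *\<^sub>R ?P (gf x))"
  define F where "F = (\<lambda>x. (x - ?P x) + g (?P x) - \<alpha> *\<^sub>R ?P (gf x))"
  have Gd: "is_diffeo Gam" unfolding Gam_def
    by (rule K_diffeo[OF gV mono f_Lip _ _ cL(2) H f_C2]) (use L_pos in auto)
  have Fd: "is_diffeo F" unfolding F_def
    by (rule K_diffeo[OF gV mono f_Lip _ _ cL(1) H f_C2]) (use L_pos alpha_pos in auto)
  have bG: "bij Gam" using Gd unfolding is_diffeo_def by blast
  have PG: "?P (Gam z) = g (?P z)" for z
  proof -
    have "?P (z - ?P z) = 0" by (simp add: Pd P_idem)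
    moreover have "?P (g (?P z)) = g (?P z)" using gV P_in P_id by blast
    ultimately show ?thesis unfolding Gam_def by (simp add: Pa)
  qed
  have gsurj: "q \<in> g ` ?V" if q: "q \<in> ?V" for q
  proof -
    obtain z where "Gam z = q" using bG by (metis bij_pointE)
    then have "g (?P z) = q" using PG P_id[OF q] by metis
    then show ?thesis using P_in by blast
  qed
  have eq: "(\<lambda>x. (x - ?P x) + inv_into ?V (gphi s) (gphi s (?P x) - \<alpha> *\<^sub>R ?P (gf x))) = inv Gam \<circ> F"
  proof
    fix x
    define q where "q = g (?P x) - \<alpha> *\<^sub>R ?P (gf x)"
    have qV: "q \<in> ?V" unfolding q_def by (intro V_diff V_scale) (auto simp: gV P_in)
    define r where "r = inv_into ?V g q"
    have rV: "r \<in> ?V" unfolding r_def by (rule inv_into_into[OF gsurj[OF qV]])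
    have gr: "g r = q" unfolding r_def by (rule f_inv_into_f[OF gsurj[OF qV]])
    have Ppsi: "?P ((x - ?P x) + r) = r" by (simp add: Pa Pd P_idem P_id[OF rV])
    have "Gam ((x - ?P x) + r) = F x" unfolding Gam_def F_def
      by (simp only: Ppsi gr) (simp add: q_def)
    then have "inv Gam (F x) = (x - ?P x) + r"
      using bG by (metis bij_is_inj inv_f_f)
    then show "(x - ?P x) + inv_into ?V (gphi s) (gphi s (?P x) - \<alpha> *\<^sub>R ?P (gf x)) = (inv Gam \<circ> F) x"
      by (simp add: r_def q_def g_def)
  qed
  show "is_diffeo (\<lambda>x. (x - ?P x) + inv_into ?V (gphi s) (gphi s (?P x) - \<alpha> *\<^sub>R ?P (gf x)))"
    unfolding eq by (rule diffeo_comp[OF diffeo_inv[OF Gd] Fd])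
qed


end
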